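(* Let $r\in\mathbb{N}$ be odd. For any $n\ge r$, $A>0$ and $\lambda\in[0,1]$, there exists $f\in C^r[-1,1]$, identically $0$ on $[-1,-1/2]$ and nonnegative on $[-1,1]$, such that every algebraic polynomial $P_n$ of degree $\le n$ which is nonnegative on $(\lambda-1/n,\lambda)$ and satisfies $P_n^{(i)}(\lambda)=f^{(i)}(\lambda)$ for $0\le i\le r$ obeys $$\|f-P_n\|>A\,\|f^{(r)}\|.$$
   Context: $\|\cdot\|$ is the sup norm on $[-1,1]$. *)

theory Defs
  imports "HOL-Analysis.Analysis" "HOL-Computational_Algebra.Polynomial"
begin

definition Cr_on :: "nat \<Rightarrow> real set \<Rightarrow> (real \<Rightarrow> real) \<Rightarrow> (nat \<Rightarrow> real \<Rightarrow> real) \<Rightarrow> bool" where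
  "Cr_on r S f D \<longleftrightarrow>
     (\<forall>x\<in>S. D 0 x = f x) \<and>
     (\<forall>i<r. \<forall>x\<in>S. (D i has_real_derivative D (Suc i) x) (at x within S)) \<and>
     continuous_on S (D r)"

definition supnorm :: "(real \<Rightarrow> real) \<Rightarrow> real" where
  "supnorm g = (SUP x\<in>{-1..1}. \<bar>g x\<bar>)"

end

theory Submission
  imports Defs
begin


lemma cont_bound:
  fixes g :: "real \<Rightarrow> real"
  assumes "continuous_on {-1..1} g"
  shows "\<exists>b\<ge>0. \<forall>x\<in>{-1..1}. \<bar>g x\<bar> \<le> b"
proof -
  have "compact (g ` {-1..1})" by (intro compact_continuous_image assms) auto
  then obtain b where "\<forall>y\<in>g ` {-1..1}. norm y \<le> b" using compact_imp_bounded bounded_iff by metis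
  then show ?thesis by (intro exI[of _ "max 0 b"]) auto
qed

lemma interp_bound:
  fixes n m :: nat
  shows "\<exists>K>0. \<forall>P::real poly. \<forall>M. degree P \<le> n \<longrightarrow>
     (\<forall>j\<le>n. \<bar>poly P (-1 + real j/(2*(real n+1)))\<bar> \<le> M) \<longrightarrow>
     (\<forall>x\<in>{-1..1}. \<bar>poly ((pderiv^^m) P) x\<bar> \<le> K*M)"
proof -
  define t where "t j = -1 + real j/(2*(real n+1))" for j :: nat
  have tne: "t j \<noteq> t k" if "j \<noteq> k" for j k
    using that unfolding t_def by (auto simp: field_simps)
  have tinj: "inj_on t {..n}" using tne by (auto simp: inj_on_def)
  define L where "L j = smult (1 / (\<Prod>k\<in>{..n}-{j}. (t j - t k))) (\<Prod>k\<in>{..n}-{j}. [:- t k, 1:])" for j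
  have degL: "degree (L j) \<le> n" if "j \<le> n" for j
  proof -
    have "degree (L j) \<le> degree (\<Prod>k\<in>{..n}-{j}. [:- t k, 1:])"
      unfolding L_def by (rule degree_smult_le)
    also have "\<dots> \<le> sum (degree \<circ> (\<lambda>k. [:- t k, 1:])) ({..n}-{j})"
      by (rule degree_prod_sum_le) simp
    also have "\<dots> = card ({..n}-{j})" by simp
    also have "\<dots> = n" using that by simp
    finally show ?thesis .
  qed
  have Lev: "poly (L j) (t i) = (if i = j then 1 else 0)" if "i \<le> n" "j \<le> n" for i j
  proof (cases "i = j")
    case True
    have "(\<Prod>k\<in>{..n}-{j}. (t j - t k)) \<noteq> 0" using tne by (auto)
    then show ?thesis using True unfolding L_def by (simp add: poly_prod)
  next
    case False
    have "(\<Prod>k\<in>{..n}-{j}. poly [:- t k, 1:] (t i)) = 0"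
      using False that by (intro prod_zero bexI[of _ i]) auto
    then show ?thesis using False unfolding L_def by (simp add: poly_prod)
  qed
  have interp: "P = (\<Sum>j\<le>n. smult (poly P (t j)) (L j))" if "degree P \<le> n" for P :: "real poly"
  proof (rule poly_eqI_degree[where A = "t ` {..n}"])
    fix x assume "x \<in> t ` {..n}"
    then obtain i where i: "i \<le> n" "x = t i" by auto
    have "poly (\<Sum>j\<le>n. smult (poly P (t j)) (L j)) x = (\<Sum>j\<le>n. poly P (t j) * (if i = j then 1 else 0))"
      using i by (simp add: poly_sum Lev)
    also have "\<dots> = poly P x" using i by (simp add: mult.commute[of _ "if _ then _ else _"] if_distrib cong: if_cong)
    finally show "poly P x = poly (\<Sum>j\<le>n. smult (poly P (t j)) (L j)) x" by simp
  next
    have c: "card (t ` {..n}) = n + 1" using tinj by (simp add: card_image)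
    show "degree P < card (t ` {..n})" using c that by simp
    have "degree (\<Sum>j\<le>n. smult (poly P (t j)) (L j)) \<le> n"
      by (intro degree_sum_le) (auto intro: order.trans[OF degree_smult_le] degL)
    then show "degree (\<Sum>j\<le>n. smult (poly P (t j)) (L j)) < card (t ` {..n})" using c by simp
  qed
  have "\<forall>j. \<exists>b\<ge>0. \<forall>x\<in>{-1..1}. \<bar>poly ((pderiv^^m) (L j)) x\<bar> \<le> b"
    by (intro allI cont_bound continuous_intros)
  then obtain b where b: "\<And>j. b j \<ge> 0" "\<And>j x. x \<in> {-1..1} \<Longrightarrow> \<bar>poly ((pderiv^^m) (L j)) x\<bar> \<le> b j"
    by metis
  define K where "K = 1 + (\<Sum>j\<le>n. b j)"
  have Kpos: "K > 0" unfolding K_def using b(1) by (smt (verit) sum_nonneg)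
  show ?thesis
  proof (intro exI[of _ K] conjI Kpos allI impI ballI)
    fix P :: "real poly" and M x :: real
    assume deg: "degree P \<le> n" and PM: "\<forall>j\<le>n. \<bar>poly P (-1 + real j/(2*(real n+1)))\<bar> \<le> M"
      and x: "x \<in> {-1..1}"
    have PM': "\<bar>poly P (t j)\<bar> \<le> M" if "j \<le> n" for j using PM that unfolding t_def by auto
    have M0: "M \<ge> 0" using PM'[of 0] by linarith
    have "(pderiv^^m) P = (\<Sum>j\<le>n. smult (poly P (t j)) ((pderiv^^m) (L j)))"
      by (subst interp[OF deg]) (simp add: higher_pderiv_sum higher_pderiv_smult)
    then have "poly ((pderiv^^m) P) x = (\<Sum>j\<le>n. poly P (t j) * poly ((pderiv^^m) (L j)) x)"
      by (simp add: poly_sum)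
    also have "\<bar>\<dots>\<bar> \<le> (\<Sum>j\<le>n. \<bar>poly P (t j) * poly ((pderiv^^m) (L j)) x\<bar>)"
      by (rule sum_abs)
    also have "\<dots> \<le> (\<Sum>j\<le>n. M * b j)"
      by (intro sum_mono) (auto simp: abs_mult intro!: mult_mono PM' b x M0)
    also have "\<dots> = M * (\<Sum>j\<le>n. b j)" by (simp add: sum_distrib_left)
    also have "\<dots> \<le> K * M" unfolding K_def using M0 by (simp add: algebra_simps)
    finally show "\<bar>poly ((pderiv^^m) P) x\<bar> \<le> K * M" .
  qed
qed



lemma pp_deriv:
  fixes c x :: real
  assumes "k \<ge> 1"
  shows "((\<lambda>y. (max 0 (y - c))^(Suc k)) has_real_derivative (real (Suc k) * (max 0 (x - c))^k)) (at x)"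
proof -
  consider "x > c" | "x < c" | "x = c" by linarith
  then show ?thesis
  proof cases
    case 1
    have d: "((\<lambda>y. (y - c)^Suc k) has_real_derivative real (Suc k) * (x-c)^k) (at x)"
      using assms by (auto intro!: derivative_eq_intros) (cases k; simp add: algebra_simps)
    have ev: "eventually (\<lambda>y. y \<in> {c<..}) (nhds x)" using 1 by (intro eventually_nhds_in_open) auto
    show ?thesis
      by (rule DERIV_cong_ev[THEN iffD2, OF refl _ _ d]) (use ev 1 in \<open>auto elim!: eventually_mono\<close>)
  next
    case 2
    have d: "((\<lambda>y. 0) has_real_derivative 0) (at x)" by simp
    have ev: "eventually (\<lambda>y. y \<in> {..<c}) (nhds x)" using 2 by (intro eventually_nhds_in_open) auto
    show ?thesis
      by (rule DERIV_cong_ev[THEN iffD2, OF refl _ _ d]) (use ev 2 assms in \<open>auto elim!: eventually_mono\<close>)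
  next
    case 3
    have lim0: "((\<lambda>y. \<bar>y - c\<bar>^k) \<longlongrightarrow> 0) (at c)"
    proof -
      have T: "((\<lambda>y. \<bar>y - c\<bar>^k) \<longlongrightarrow> \<bar>c - c\<bar>^k) (at c)" by (intro tendsto_intros)
      have E: "\<bar>c - c\<bar>^k = (0::real)" using assms by simp
      show ?thesis using T unfolding E .
    qed
    have "((\<lambda>y. ((max 0 (y - c))^(Suc k) - (max 0 (c - c))^(Suc k)) / (y - c)) \<longlongrightarrow> 0) (at c)"
    proof (rule Lim_null_comparison[OF _ lim0])
      show "\<forall>\<^sub>F y in at c. norm (((max 0 (y - c))^(Suc k) - (max 0 (c - c))^(Suc k)) / (y - c)) \<le> \<bar>y - c\<bar>^k"
      proof (rule always_eventually, rule allI)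
        fix y :: real
        show "norm (((max 0 (y - c))^(Suc k) - (max 0 (c - c))^(Suc k)) / (y - c)) \<le> \<bar>y - c\<bar>^k"
        proof (cases "y > c")
          case True then show ?thesis by (simp add: max_def)
        next
          case False then show ?thesis by (simp add: max_def)
        qed
      qed
    qed
    moreover have "real (Suc k) * (max 0 (x - c))^k = 0" using 3 assms by simp
    ultimately show ?thesis using 3 by (simp only: has_field_derivative_iff)
  qed
qed


lemma pow_shift_deriv:
  fixes a t :: real
  shows "((\<lambda>y. (y - a)^Suc k) has_real_derivative real (Suc k) * (t - a)^k) (at t)"
proof -
  have "((\<lambda>y. y^Suc k) has_real_derivative real (Suc k) * (t - a)^k) (at (t - a))"
    by (rule DERIV_pow2)
  then have "((\<lambda>y. (y - a)^Suc k) has_real_derivative real (Suc k) * (t - a)^k) (at t)"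
    using DERIV_shift[of "\<lambda>y. y^Suc k" _ t "- a"] by simp
  then show ?thesis .
qed

theorem lemma3p9:
  fixes r n :: nat and A lam :: real
  assumes "odd r" and "n \<ge> r" and "A > 0" and "lam \<in> {0..1}"
  shows "\<exists>f D. Cr_on r {-1..1} f D \<and>
           (\<forall>x\<in>{-1..-1/2}. f x = 0) \<and>
           (\<forall>x\<in>{-1..1}. f x \<ge> 0) \<and>
           (\<forall>P :: real poly.
              degree P \<le> n \<longrightarrow>
              (\<forall>x\<in>{lam - 1 / real n<..<lam}. poly P x \<ge> 0) \<longrightarrow>
              (\<forall>i\<le>r. poly ((pderiv ^^ i) P) lam = D i lam) \<longrightarrow>
              supnorm (\<lambda>x. f x - poly P x) > A * supnorm (D r))"
proof -
  obtain K where Kpos: "K > 0" and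
    K: "\<And>P M x. degree P \<le> n \<Longrightarrow> (\<forall>j\<le>n. \<bar>poly P (-1 + real j/(2*(real n+1)))\<bar> \<le> M) \<Longrightarrow>
          x \<in> {-1..1} \<Longrightarrow> \<bar>poly ((pderiv^^(Suc r)) P) x\<bar> \<le> K*M"
    using interp_bound[of n "Suc r"] by blast
  have r1: "r \<ge> 1" using assms(1) by (cases r) auto
  have n1: "real n \<ge> 1" using r1 assms(2) by simp
  have lam: "0 \<le> lam" "lam \<le> 1" using assms(4) by auto
  define h where "h = min (1/(2*real n)) (1/(2*A*K))"
  have hpos: "h > 0" unfolding h_def using n1 Kpos assms(3) by simp
  have h1: "h < 1/real n"
  proof -
    have "h \<le> 1/(2*real n)" unfolding h_def by simp
    also have "\<dots> < 1/real n" using n1 by (simp add: field_simps)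
    finally show ?thesis .
  qed
  have h3: "h \<le> 1/2"
  proof -
    have "h \<le> 1/(2*real n)" unfolding h_def by simp
    also have "\<dots> \<le> 1/2" using n1 by (simp add: field_simps)
    finally show ?thesis .
  qed
  have h2: "A*K*h \<le> 1/2"
  proof -
    have "h \<le> 1/(2*A*K)" unfolding h_def by simp
    then have "A*K*h \<le> A*K*(1/(2*A*K))" using Kpos assms(3) by (intro mult_left_mono) auto
    also have "\<dots> = 1/2" using Kpos assms(3) by simp
    finally show ?thesis .
  qed
  define a where "a = lam - h"
  have a1: "a \<ge> -1/2" "a < lam" "a > lam - 1/real n" unfolding a_def using h1 h3 hpos lam by auto
  define cc :: "nat \<Rightarrow> real" where "cc i = fact (r+1) / fact (r+1-i)" for i :: nat
  have cc_Suc: "cc i * real (Suc (r - i)) = cc (Suc i)" if "i \<le> r" for i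
  proof -
    have e: "r + 1 - i = Suc (r - i)" "r + 1 - Suc i = r - i" using that by auto
    have fs: "(fact (Suc (r - i)) :: real) = real (Suc (r - i)) * fact (r - i)" by (rule fact_Suc)
    have fp: "(fact (r - i) :: real) > 0" by simp
    show ?thesis unfolding cc_def e fs using fp by (simp del: of_nat_Suc)
  qed
  have cc0: "cc 0 = 1" unfolding cc_def by simp
  have ccr: "cc r = fact (Suc r)" unfolding cc_def by simp
  define D where "D i x = cc i * ((max 0 (x - a))^(r+1-i) - (max 0 (x - lam))^(r+1-i))" for i x
  define f where "f = D 0"
  have Dderiv: "(D i has_real_derivative D (Suc i) x) (at x)" if "i < r" for i x
  proof -
    have e: "r + 1 - i = Suc (r - i)" "r + 1 - Suc i = r - i" and k: "r - i \<ge> 1" using that by auto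
    have d: "((\<lambda>y. cc i * ((max 0 (y - a))^Suc (r-i) - (max 0 (y - lam))^Suc (r-i))) has_real_derivative
       cc i * (real (Suc (r-i)) * (max 0 (x - a))^(r-i) - real (Suc (r-i)) * (max 0 (x - lam))^(r-i))) (at x)"
      by (intro DERIV_cmult DERIV_diff pp_deriv k)
    have "cc i * (real (Suc (r-i)) * (max 0 (x - a))^(r-i) - real (Suc (r-i)) * (max 0 (x - lam))^(r-i))
       = (cc i * real (Suc (r-i))) * ((max 0 (x - a))^(r-i) - (max 0 (x - lam))^(r-i))"
      by (simp only: right_diff_distrib mult.assoc)
    also have "\<dots> = D (Suc i) x" unfolding D_def e using cc_Suc[of i] that by simp
    finally have eq: "cc i * (real (Suc (r-i)) * (max 0 (x - a))^(r-i) - real (Suc (r-i)) * (max 0 (x - lam))^(r-i))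
       = D (Suc i) x" .
    have Di: "D i = (\<lambda>y. cc i * ((max 0 (y - a))^Suc (r-i) - (max 0 (y - lam))^Suc (r-i)))"
      by (rule ext) (simp only: D_def e)
    show ?thesis using d unfolding eq Di .
  qed
  have contD: "continuous_on S (D i)" for S i unfolding D_def by (intro continuous_intros)
  have Cr: "Cr_on r {-1..1} f D"
    unfolding Cr_on_def f_def using Dderiv contD by (auto intro: has_field_derivative_at_within)
  have fz: "\<forall>x\<in>{-1..-1/2}. f x = 0"
  proof
    fix x :: real assume "x \<in> {-1..-1/2}"
    then have "max 0 (x - a) = 0" "max 0 (x - lam) = 0" using a1 lam by auto
    then show "f x = 0" unfolding f_def D_def by simp
  qed
  have fnn: "\<forall>x\<in>{-1..1}. f x \<ge> 0"
  proof
    fix x :: real assume "x \<in> {-1..1}"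
    have "(max 0 (x - lam))^(r+1) \<le> (max 0 (x - a))^(r+1)"
      using a1 by (intro power_mono) auto
    then show "f x \<ge> 0" unfolding f_def D_def cc0 by simp
  qed
  have supD: "supnorm (D r) \<le> fact (Suc r) * h"
    unfolding supnorm_def
  proof (rule cSUP_least)
    show "{-1..1::real} \<noteq> {}" by simp
    fix x :: real
    have "\<bar>max 0 (x - a) - max 0 (x - lam)\<bar> \<le> h" unfolding a_def using hpos by (auto simp: max_def)
    then show "\<bar>D r x\<bar> \<le> fact (Suc r) * h" unfolding D_def ccr
      by (simp add: abs_mult)
  qed
  have ev: "even (Suc r)" using assms(1) by simp
  have alam: "(a - lam)^(Suc r) = h^(Suc r)"
  proof -
    have "(a - lam)^(Suc r) = (- h)^(Suc r)" unfolding a_def by simp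
    also have "\<dots> = h^(Suc r)" using ev by (rule power_minus_even)
    finally show ?thesis .
  qed
  have Sg: "(\<Sum>m<Suc r. D m lam / fact m * (a - lam)^m) = -(h^(Suc r))"
  proof -
    define dg where "dg m x = cc m * (x - a)^(r+1-m)" for m x
    have "\<exists>t. (if a < lam then a < t \<and> t < lam else lam < t \<and> t < a) \<and>
      (\<lambda>x. (x - a)^(r+1)) a = (\<Sum>m<Suc r. (dg m lam / fact m) * (a - lam)^m) + (dg (Suc r) t / fact (Suc r)) * (a - lam)^(Suc r)"
    proof (rule Taylor[where a = "-1" and b = 1 and f = "\<lambda>x. (x - a)^(r+1)" and diff = dg and n = "Suc r" and c = lam and x = a])
      show "dg 0 = (\<lambda>x. (x - a)^(r+1))" unfolding dg_def cc0 by auto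
      show "\<forall>m t. m < Suc r \<and> -1 \<le> t \<and> t \<le> 1 \<longrightarrow> DERIV (dg m) t :> dg (Suc m) t"
      proof (intro allI impI)
        fix m :: nat and t :: real assume "m < Suc r \<and> -1 \<le> t \<and> t \<le> 1"
        then have m: "m \<le> r" by auto
        have e: "r + 1 - m = Suc (r - m)" "r + 1 - Suc m = r - m" using m by auto
        have d: "((\<lambda>y. cc m * (y - a)^Suc (r-m)) has_real_derivative cc m * (real (Suc (r-m)) * (t - a)^(r-m))) (at t)"
          by (intro DERIV_cmult pow_shift_deriv)
        have eq: "cc m * (real (Suc (r-m)) * (t - a)^(r-m)) = dg (Suc m) t"
          unfolding dg_def e by (simp only: mult.assoc[symmetric] cc_Suc[OF m])
        have Dm: "dg m = (\<lambda>y. cc m * (y-a)^Suc(r-m))" by (rule ext) (simp only: dg_def e)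
        show "DERIV (dg m) t :> dg (Suc m) t" using d unfolding eq Dm .
      qed
    qed (use a1 lam in auto)
    then obtain t where t0: "0 = (\<Sum>m<Suc r. (dg m lam / fact m) * (a - lam)^m) + (dg (Suc r) t / fact (Suc r)) * (a - lam)^(Suc r)"
      by auto
    have f1: "dg (Suc r) t / fact (Suc r) = 1" unfolding dg_def cc_def by simp
    have dgD: "dg m lam = D m lam" if "m < Suc r" for m
    proof -
      have e: "r + 1 - m = Suc (r - m)" using that by auto
      show ?thesis unfolding dg_def D_def e using a1 by simp
    qed
    have ss: "(\<Sum>m<Suc r. (dg m lam / fact m) * (a - lam)^m) = (\<Sum>m<Suc r. D m lam / fact m * (a - lam)^m)"
      using dgD by (intro sum.cong) auto
    from t0 have "0 = (\<Sum>m<Suc r. D m lam / fact m * (a - lam)^m) + h^(Suc r)"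
      unfolding ss f1 alam by simp
    then show ?thesis by linarith
  qed
  show ?thesis
  proof (intro exI[of _ f] exI[of _ D] conjI Cr fz fnn allI impI)
    fix P :: "real poly"
    assume deg: "degree P \<le> n" and nn: "\<forall>x\<in>{lam - 1 / real n<..<lam}. poly P x \<ge> 0"
      and jet: "\<forall>i\<le>r. poly ((pderiv ^^ i) P) lam = D i lam"
    have "\<exists>t. (if a < lam then a < t \<and> t < lam else lam < t \<and> t < a) \<and>
      poly P a = (\<Sum>m<Suc r. (poly ((pderiv^^m) P) lam / fact m) * (a - lam)^m) + (poly ((pderiv^^Suc r) P) t / fact (Suc r)) * (a - lam)^(Suc r)"
    proof (rule Taylor[where a = "-1" and b = 1 and f = "poly P" and n = "Suc r" and c = lam and x = a and diff = "\<lambda>m x. poly ((pderiv^^m) P) x"])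
      show "\<forall>m t. m < Suc r \<and> -1 \<le> t \<and> t \<le> 1 \<longrightarrow> DERIV (\<lambda>x. poly ((pderiv^^m) P) x) t :> poly ((pderiv^^Suc m) P) t"
        by simp
    qed (use a1 lam in auto)
    then obtain t where t: "a < t" "t < lam" and
      tay: "poly P a = (\<Sum>m<Suc r. (poly ((pderiv^^m) P) lam / fact m) * (a - lam)^m) + (poly ((pderiv^^Suc r) P) t / fact (Suc r)) * (a - lam)^(Suc r)"
      using a1 by auto
    have ssP: "(\<Sum>m<Suc r. (poly ((pderiv^^m) P) lam / fact m) * (a - lam)^m) = (\<Sum>m<Suc r. D m lam / fact m * (a - lam)^m)"
      using jet by (intro sum.cong) auto
    have gen: "\<And>X Y Z::real. X = -Z + Y*Z \<Longrightarrow> X = Z*(Y-1)" by (simp add: algebra_simps)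
    have tay2: "poly P a = h^(Suc r) * (poly ((pderiv^^Suc r) P) t / fact (Suc r) - 1)"
      by (rule gen) (use tay in \<open>simp only: ssP Sg alam\<close>)
    have "poly P a \<ge> 0" using nn a1 by auto
    then have "poly ((pderiv^^Suc r) P) t / fact (Suc r) - 1 \<ge> 0"
    proof -
      have hp: "h^(Suc r) > 0" using hpos by simp
      show ?thesis using tay2 hp \<open>poly P a \<ge> 0\<close> zero_le_mult_iff[of "h^(Suc r)"] by auto
    qed
    moreover have gen2: "\<And>Q F::real. F > 0 \<Longrightarrow> 0 \<le> Q/F - 1 \<Longrightarrow> F \<le> Q" by (simp add: field_simps)
    moreover have "(fact (Suc r)::real) > 0" by (rule fact_gt_zero)
    ultimately have big: "poly ((pderiv^^Suc r) P) t \<ge> fact (Suc r)" by blast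
    define Sn where "Sn = supnorm (\<lambda>x. f x - poly P x)"
    have contf: "continuous_on {-1..1} (\<lambda>x. f x - poly P x)"
      unfolding f_def D_def by (intro continuous_intros)
    obtain bb where bb: "\<forall>x\<in>{-1..1}. \<bar>f x - poly P x\<bar> \<le> bb" using cont_bound[OF contf] by blast
    have bdd: "bdd_above ((\<lambda>x. \<bar>f x - poly P x\<bar>) ` {-1..1})" using bb by (intro bdd_aboveI2) auto
    have nodes: "\<forall>j\<le>n. \<bar>poly P (-1 + real j/(2*(real n+1)))\<bar> \<le> Sn"
    proof (intro allI impI)
      fix j assume j: "j \<le> n"
      define y where "y = -1 + real j/(2*(real n+1))"
      have "real j/(2*(real n+1)) \<le> 1/2" using j by (simp add: field_simps)
      moreover have "real j/(2*(real n+1)) \<ge> 0" by simp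
      ultimately have y: "y \<in> {-1..-1/2}" unfolding y_def atLeastAtMost_iff by linarith
      then have "f y = 0" using fz by blast
      then have "\<bar>poly P y\<bar> = \<bar>f y - poly P y\<bar>" by simp
      also have "\<dots> \<le> Sn" unfolding Sn_def supnorm_def using y by (intro cSUP_upper bdd) auto
      finally show "\<bar>poly P (-1 + real j/(2*(real n+1)))\<bar> \<le> Sn" unfolding y_def .
    qed
    have "\<bar>poly ((pderiv^^(Suc r)) P) t\<bar> \<le> K * Sn"
      using K[OF deg nodes] t a1 lam by auto
    with big have KS: "fact (Suc r) \<le> K * Sn" by linarith
    have "A * supnorm (D r) \<le> A * (fact (Suc r) * h)" using supD assms(3) by (intro mult_left_mono) auto
    also have "\<dots> < Sn"
    proof -
      have fp: "(fact (Suc r) :: real) > 0" by simp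
      have "K * (A * (fact (Suc r) * h)) = fact (Suc r) * (A*K*h)" by (simp add: algebra_simps)
      also have "\<dots> \<le> fact (Suc r) * (1/2)" using h2 fp by (intro mult_left_mono) auto
      also have "\<dots> < fact (Suc r)" using fp by simp
      also have "\<dots> \<le> K * Sn" by (rule KS)
      finally show ?thesis using Kpos by simp
    qed
    finally show "supnorm (\<lambda>x. f x - poly P x) > A * supnorm (D r)" unfolding Sn_def .
  qed
qed

end
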